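(* Let $\mathsf{M}$ be a finite set of $N\ge1$ elements and let $\mathcal{C}$ be the set of all clusterings (partitions into nonempty blocks) of $\mathsf{M}$. The proposal kernel $\phi_Y$ on $\mathcal{C}$ described in the context is irreducible.
   Context: Proposal kernel $\phi_Y(\mathbf{A},\mathbf{A}')$ with parameter $\theta_1>0$: given $\mathbf{A}=\{A_1,\dots,A_n\}$, choose a cluster $A_i$ uniformly at random; choose $k\in\{1,\dots,|A_i|\}$ according to the truncated exponential distribution $PE(k;\theta_1)=\frac{1-e^{-\theta_1}}{e^{-\theta_1}}\sum_{m=1}^\infty\exp[-\theta_1((m-1)|A_i|+k)]$; choose a subset of $k$ points of $A_i$ uniformly at random among the $\binom{|A_i|}{k}$ subsets; choose $A_j$ uniformly at random from $(\mathbf{A}\setminus\{A_i\})\cup\{B\}$ where $B$ is an empty set representing a new cluster; move the chosen points from $A_i$ to $A_j$ (discarding $A_i$ if it becomes empty). The resulting clustering is $\mathbf{A}'$. Irreducible means: for every $\mathbf{A},\mathbf{A}'\in\mathcal{C}$ there is $m$ with positive $m$-step transition probability from $\mathbf{A}$ to $\mathbf{A}'$. *)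

theory Defs
  imports Complex_Main "HOL-Library.Disjoint_Sets"
begin

definition clusterings :: "'a set \<Rightarrow> 'a set set set" where
  "clusterings M = {P. partition_on M P}"

text \<open>Truncated exponential distribution PE(k; theta) on {1..n}, n = size of the chosen cluster.\<close>
definition PE :: "real \<Rightarrow> nat \<Rightarrow> nat \<Rightarrow> real" where
  "PE \<theta> n k = (1 - exp (- \<theta>)) / exp (- \<theta>) *
      (\<Sum>m. exp (- \<theta> * (real m * real n + real k)))"
  (* summation index m starts at 0 here, i.e. corresponds to (m-1) for m \<ge> 1 *)

text \<open>Move the points S from cluster Ai to target T (T = {} represents the new empty cluster B),
  discarding Ai if it becomes empty.\<close>
definition move_pts :: "'a set set \<Rightarrow> 'a set \<Rightarrow> 'a set \<Rightarrow> 'a set \<Rightarrow> 'a set set" where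
  "move_pts A Ai S T =
     (A - {Ai, T}) \<union> (if Ai - S = {} then {} else {Ai - S}) \<union> {T \<union> S}"

text \<open>Cluster Ai uniformly among the |A| clusters; k by PE; subset S of size k uniformly;
  target uniformly among (A - {Ai}) \<union> {B}, a set of |A| elements (B represented by {}).\<close>
definition phiY :: "real \<Rightarrow> 'a set set \<Rightarrow> 'a set set \<Rightarrow> real" where
  "phiY \<theta> A A' =
     (\<Sum>Ai\<in>A. (1 / real (card A)) *
       (\<Sum>k\<in>{1..card Ai}. PE \<theta> (card Ai) k *
         (\<Sum>S\<in>{S. S \<subseteq> Ai \<and> card S = k}. (1 / real (card Ai choose k)) *
           (\<Sum>T\<in>(A - {Ai}) \<union> {{}}. (1 / real (card ((A - {Ai}) \<union> {{}}))) *
              (if move_pts A Ai S T = A' then 1 else 0)))))"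

fun phiY_pow :: "real \<Rightarrow> 'a set \<Rightarrow> nat \<Rightarrow> 'a set set \<Rightarrow> 'a set set \<Rightarrow> real" where
  "phiY_pow \<theta> M 0 A A' = (if A = A' then 1 else 0)"
| "phiY_pow \<theta> M (Suc m) A A' =
     (\<Sum>B\<in>clusterings M. phiY_pow \<theta> M m A B * phiY \<theta> B A')"

definition irreducible_on :: "'a set set set \<Rightarrow> (nat \<Rightarrow> 'a set set \<Rightarrow> 'a set set \<Rightarrow> real) \<Rightarrow> bool" where
  "irreducible_on C P \<longleftrightarrow> (\<forall>A\<in>C. \<forall>A'\<in>C. \<exists>m. m \<ge> 1 \<and> P m A A' > 0)"

end

theory Submission
  imports Defs
begin

lemma PE_pos:
  assumes "\<theta> > 0" "n \<ge> 1"
  shows "PE \<theta> n k > 0"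
proof -
  let ?f = "\<lambda>m::nat. exp (- \<theta> * (real m * real n + real k))"
  have eq: "?f = (\<lambda>m. exp (- \<theta> * real k) * exp (- \<theta> * real n) ^ m)"
    by (rule ext) (simp add: exp_of_nat_mult[symmetric] exp_add[symmetric] algebra_simps)
  have "real n > 0" using assms(2) by simp
  then have tp: "\<theta> * real n > 0" using assms(1) by (metis mult_pos_pos)
  then have r: "exp (- \<theta> * real n) < 1" by simp
  have s: "summable ?f" unfolding eq
    by (rule summable_mult) (rule summable_geometric, simp add: r tp)
  have "suminf ?f > 0"
    by (rule suminf_pos[OF s]) simp
  moreover have "(1 - exp (- \<theta>)) / exp (- \<theta>) > 0" using assms by simp
  ultimately show ?thesis unfolding PE_def by (metis mult_pos_pos)
qed

lemma phiY_nonneg: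
  fixes A A' :: "'a set set"
  assumes "\<theta> > 0"
  shows "phiY \<theta> A A' \<ge> 0"
  unfolding phiY_def
proof (rule sum_nonneg, rule mult_nonneg_nonneg, simp, rule sum_nonneg)
  fix Ai :: "'a set" and k assume "k \<in> {1..card Ai}"
  then have "card Ai \<ge> 1" by auto
  then have "PE \<theta> (card Ai) k > 0" using PE_pos assms by blast
  then show "0 \<le> PE \<theta> (card Ai) k *
         (\<Sum>S\<in>{S. S \<subseteq> Ai \<and> card S = k}. (1 / real (card Ai choose k)) *
           (\<Sum>T\<in>(A - {Ai}) \<union> {{}}. (1 / real (card ((A - {Ai}) \<union> {{}}))) *
              (if move_pts A Ai S T = A' then 1 else 0)))"
    by (intro mult_nonneg_nonneg sum_nonneg) auto
qed

lemma phiY_pos: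
  fixes A A' :: "'a set set"
  assumes "\<theta> > 0" "finite A" "Ai \<in> A" "finite Ai" "S \<subseteq> Ai" "S \<noteq> {}"
    "T \<in> (A - {Ai}) \<union> {{}}" "move_pts A Ai S T = A'"
  shows "phiY \<theta> A A' > 0"
proof -
  define g where "g = (\<lambda>(B::'a set) (S::'a set). (\<Sum>T\<in>(A - {B}) \<union> {{}}. (1 / real (card ((A - {B}) \<union> {{}}))) *
              (if move_pts A B S T = A' then 1 else 0)))"
  define h where "h = (\<lambda>B k. (\<Sum>S\<in>{S. S \<subseteq> B \<and> card S = k}. (1 / real (card B choose k)) * g B S))"
  define p where "p = (\<lambda>B. (1 / real (card A)) * (\<Sum>k\<in>{1..card B}. PE \<theta> (card B) k * h B k))"
  have gnn: "g B S' \<ge> 0" for B S' unfolding g_def by (intro sum_nonneg) auto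
  have hnn: "h B k \<ge> 0" for B k unfolding h_def using gnn by (intro sum_nonneg mult_nonneg_nonneg) auto
  have pnn: "p B \<ge> 0" for B unfolding p_def
  proof (intro mult_nonneg_nonneg sum_nonneg)
    fix k assume "k \<in> {1..card B}"
    then show "0 \<le> PE \<theta> (card B) k" using PE_pos[OF assms(1)] by (simp add: less_imp_le)
  qed (auto simp: hnn)
  have eq: "phiY \<theta> A A' = sum p A" unfolding phiY_def p_def h_def g_def by simp
  have cS: "card S \<in> {1..card Ai}" using assms card_mono[of Ai S] finite_subset[of S Ai]
    by (auto simp: card_gt_0_iff Suc_le_eq)
  have cAi: "card Ai \<ge> 1" using cS by auto
  have fin: "finite {S. S \<subseteq> Ai \<and> card S = k}" for k using assms(4) by auto
  have cA: "card A > 0" using assms(2,3) card_gt_0_iff by blast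
  have gpos: "g Ai S > 0" unfolding g_def
    apply (rule sum_pos2[where i=T])
    using assms by (auto simp: card_gt_0_iff)
  have chpos: "real (card Ai choose card S) > 0"
    using cS by (simp add: zero_less_binomial_iff)
  have hpos: "h Ai (card S) > 0" unfolding h_def
    apply (rule sum_pos2[where i=S])
    using fin assms(5) gnn gpos chpos by auto
  have "(\<Sum>k\<in>{1..card Ai}. PE \<theta> (card Ai) k * h Ai k) > 0"
  proof (rule sum_pos2[where i="card S"])
    show "0 < PE \<theta> (card Ai) (card S) * h Ai (card S)"
      using hpos PE_pos[OF assms(1) cAi] by simp
    show "0 \<le> PE \<theta> (card Ai) i * h Ai i" if "i \<in> {1..card Ai}" for i
      using PE_pos[OF assms(1) cAi] hnn by (meson less_imp_le mult_nonneg_nonneg)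
  qed (use cS in auto)
  then have "p Ai > 0" unfolding p_def using cA by simp
  then show ?thesis unfolding eq using assms(2,3) pnn by (intro sum_pos2[where i=Ai]) auto
qed

lemma pow_nonneg:
  assumes "\<theta> > 0"
  shows "phiY_pow \<theta> M m A B \<ge> 0"
  by (induction m arbitrary: B) (auto intro!: sum_nonneg mult_nonneg_nonneg phiY_nonneg assms)

lemma pow_step:
  assumes "finite M" "\<theta> > 0" "phiY_pow \<theta> M m A B > 0" "B \<in> clusterings M" "phiY \<theta> B C > 0"
  shows "phiY_pow \<theta> M (Suc m) A C > 0"
proof -
  have "finite (clusterings M)" unfolding clusterings_def using finitely_many_partition_on[OF assms(1)] .
  then show ?thesis using assms
    by (simp, intro sum_pos2[where i=B]) (auto intro!: mult_nonneg_nonneg pow_nonneg phiY_nonneg)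
qed

definition Rel :: "real \<Rightarrow> 'a set \<Rightarrow> ('a set set \<times> 'a set set) set" where
  "Rel \<theta> M = {(B, C). B \<in> clusterings M \<and> C \<in> clusterings M \<and> phiY \<theta> B C > 0}"

lemma reach:
  assumes "finite M" "\<theta> > 0" "(A, C) \<in> (Rel \<theta> M)\<^sup>*"
  shows "\<exists>m. phiY_pow \<theta> M m A C > 0"
  using assms(3)
proof (induction rule: rtrancl_induct)
  case base
  show ?case by (rule exI[of _ 0]) simp
next
  case (step y z)
  then obtain m where "phiY_pow \<theta> M m A y > 0" by blast
  with step(2) show ?case using pow_step[OF assms(1,2)] unfolding Rel_def by blast
qed

lemma part_facts:
  assumes "finite M" "partition_on M A"
  shows "finite A" "\<And>X. X \<in> A \<Longrightarrow> finite X" "{} \<notin> A"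
proof -
  show "finite A" by (rule finite_elements[OF assms])
  show "{} \<notin> A" by (rule partition_onD3[OF assms(2)])
  fix X assume "X \<in> A"
  then have "X \<subseteq> M" using partition_onD1[OF assms(2)] by blast
  then show "finite X" using assms(1) finite_subset by blast
qed

lemma self_loop:
  assumes "finite M" "\<theta> > 0" "partition_on M A" "A \<noteq> {}"
  shows "phiY \<theta> A A > 0"
proof -
  obtain Ai where Ai: "Ai \<in> A" using assms(4) by blast
  note pf = part_facts[OF assms(1,3)]
  have ne: "Ai \<noteq> {}" using pf(3) Ai by auto
  have "move_pts A Ai Ai {} = A" unfolding move_pts_def using Ai pf(3) by auto
  then show ?thesis using phiY_pos[OF assms(2) pf(1) Ai pf(2)[OF Ai] order_refl ne, of "{}" A] by auto
qed

lemma merge: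
  assumes "finite M" "\<theta> > 0" "partition_on M A" "Ai \<in> A" "Aj \<in> A" "Ai \<noteq> Aj"
  defines "A2 \<equiv> insert (Ai \<union> Aj) (A - {Ai, Aj})"
  shows "partition_on M A2" "card A2 < card A" "phiY \<theta> A A2 > 0" "phiY \<theta> A2 A > 0"
proof -
  note pf = part_facts[OF assms(1,3)]
  have D: "\<And>a b. a \<in> A \<Longrightarrow> b \<in> A \<Longrightarrow> a \<noteq> b \<Longrightarrow> a \<inter> b = {}"
    using disjointD[OF partition_onD2[OF assms(3)]] by blast
  have disj: "Ai \<inter> Aj = {}" using D assms(4-6) by blast
  have neI: "Ai \<noteq> {}" "Aj \<noteq> {}" using pf(3) assms(4,5) by auto
  have notin: "Ai \<union> Aj \<notin> A"
  proof
    assume C: "Ai \<union> Aj \<in> A"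
    have "Ai \<union> Aj = Ai"
    proof (rule ccontr)
      assume "Ai \<union> Aj \<noteq> Ai"
      then have "(Ai \<union> Aj) \<inter> Ai = {}" using D[OF C assms(4)] by blast
      then show False using neI by blast
    qed
    then have "Aj \<subseteq> Ai" by blast
    then show False using disj neI by blast
  qed
  show "partition_on M A2"
  proof (rule partition_onI)
    have "\<Union>A2 = \<Union>A" unfolding A2_def using assms(4,5) by blast
    then show "\<Union>A2 = M" using partition_onD1[OF assms(3)] by simp
    show "{} \<notin> A2" unfolding A2_def using pf(3) neI by blast
    fix p q assume p: "p \<in> A2" and q: "q \<in> A2" and pq: "p \<noteq> q"
    show "disjnt p q"
    proof (cases "p = Ai \<union> Aj")
      case True
      then have q': "q \<in> A" "q \<noteq> Ai" "q \<noteq> Aj" using q pq unfolding A2_def by auto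
      have "q \<inter> Ai = {}" "q \<inter> Aj = {}" using D[OF q'(1) assms(4) q'(2)] D[OF q'(1) assms(5) q'(3)] by auto
      then show ?thesis using True by (auto simp: disjnt_def)
    next
      case False
      then have p': "p \<in> A" "p \<noteq> Ai" "p \<noteq> Aj" using p unfolding A2_def by auto
      show ?thesis
      proof (cases "q = Ai \<union> Aj")
        case True
        have "p \<inter> Ai = {}" "p \<inter> Aj = {}" using D[OF p'(1) assms(4) p'(2)] D[OF p'(1) assms(5) p'(3)] by auto
        then show ?thesis using True by (auto simp: disjnt_def)
      next
        case False
        then have "q \<in> A" using q unfolding A2_def by auto
        then show ?thesis using D[OF p'(1) _ pq] by (auto simp: disjnt_def)
      qed
    qed
  qed
  have c1: "card A2 = Suc (card (A - {Ai, Aj}))" unfolding A2_def using pf(1) notin by simp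
  have c2: "card (A - {Ai, Aj}) = card A - 2"
    using pf(1) assms(4-6) by (subst card_Diff_subset) auto
  have c3: "card {Ai, Aj} \<le> card A" using pf(1) assms(4,5) by (intro card_mono) auto
  then have "card A \<ge> 2" using assms(6) by simp
  then show "card A2 < card A" using c1 c2 by simp
  have "move_pts A Ai Ai Aj = A2" unfolding move_pts_def A2_def by auto
  then show "phiY \<theta> A A2 > 0"
    using phiY_pos[OF assms(2) pf(1) assms(4) pf(2)[OF assms(4)] order_refl neI(1), of Aj] assms(5,6) by auto
  have fA2: "finite A2" unfolding A2_def using pf(1) by simp
  have in2: "Ai \<union> Aj \<in> A2" unfolding A2_def by simp
  have mv: "move_pts A2 (Ai \<union> Aj) Aj {} = A"
  proof -
    have e1: "A2 - {Ai \<union> Aj, {}} = A - {Ai, Aj}" unfolding A2_def using notin pf(3) by blast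
    have e2: "(Ai \<union> Aj) - Aj = Ai" using disj by blast
    have "move_pts A2 (Ai \<union> Aj) Aj {} = (A - {Ai, Aj}) \<union> {Ai} \<union> {Aj}"
      unfolding move_pts_def e1 e2 using neI by simp
    also have "\<dots> = A" using assms(4,5) by blast
    finally show ?thesis .
  qed
  have fin: "finite (Ai \<union> Aj)" using pf(2)[OF assms(4)] pf(2)[OF assms(5)] by simp
  show "phiY \<theta> A2 A > 0"
    by (rule phiY_pos[OF assms(2) fA2 in2 fin _ neI(2) _ mv]) auto
qed

lemma to_top:
  assumes "finite M" "\<theta> > 0" "M \<noteq> {}"
  shows "partition_on M A \<Longrightarrow> (A, {M}) \<in> (Rel \<theta> M)\<^sup>* \<and> ({M}, A) \<in> (Rel \<theta> M)\<^sup>*"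
proof (induction "card A" arbitrary: A rule: less_induct)
  case less
  note pf = part_facts[OF assms(1) less.prems]
  show ?case
  proof (cases "\<exists>Ai\<in>A. \<exists>Aj\<in>A. Ai \<noteq> Aj")
    case True
    then obtain Ai Aj where h: "Ai \<in> A" "Aj \<in> A" "Ai \<noteq> Aj" by blast
    note mg = merge[OF assms(1,2) less.prems h]
    define A2 where "A2 = insert (Ai \<union> Aj) (A - {Ai, Aj})"
    have IH: "(A2, {M}) \<in> (Rel \<theta> M)\<^sup>* \<and> ({M}, A2) \<in> (Rel \<theta> M)\<^sup>*"
      using less.hyps mg(1,2) unfolding A2_def by blast
    have "(A, A2) \<in> Rel \<theta> M" "(A2, A) \<in> Rel \<theta> M"
      using mg less.prems unfolding Rel_def clusterings_def A2_def by auto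
    then show ?thesis using IH by (meson converse_rtrancl_into_rtrancl rtrancl.rtrancl_into_rtrancl)
  next
    case False
    have "A = {M}"
    proof -
      have "A \<noteq> {}" using less.prems assms(3) partition_onD1 by fastforce
      then obtain X where "A = {X}" using False by blast
      then show ?thesis using less.prems partition_onD1 by fastforce
    qed
    then show ?thesis by simp
  qed
qed

theorem lemma19:
  fixes M :: "'a set" and \<theta> :: real
  assumes "finite M" and "card M \<ge> 1" and "\<theta> > 0"
  shows "irreducible_on (clusterings M) (phiY_pow \<theta> M)"
  unfolding irreducible_on_def
proof (intro ballI)
  fix A A' assume A: "A \<in> clusterings M" and A': "A' \<in> clusterings M"
  have Mne: "M \<noteq> {}" using assms(2) by auto
  have pA: "partition_on M A" and pA': "partition_on M A'" using A A' unfolding clusterings_def by auto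
  have "(A, A') \<in> (Rel \<theta> M)\<^sup>*"
    using to_top[OF assms(1,3) Mne pA] to_top[OF assms(1,3) Mne pA'] by auto
  then obtain m where m: "phiY_pow \<theta> M m A A' > 0" using reach[OF assms(1,3)] by blast
  have "A' \<noteq> {}" using pA' Mne partition_onD1 by fastforce
  then have "phiY \<theta> A' A' > 0" using self_loop[OF assms(1,3) pA'] by blast
  then have "phiY_pow \<theta> M (Suc m) A A' > 0" using pow_step[OF assms(1,3) m A'] by blast
  then show "\<exists>m\<ge>1. phiY_pow \<theta> M m A A' > 0" by (intro exI[of _ "Suc m"]) auto
qed

end
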